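(* Let $(\mathcal{H},\langle\cdot,\cdot\rangle)$ be an infinite-dimensional separable Hilbert space, and let $\mathsf{H}$ be a quasi-self-adjoint operator in $\mathcal{H}$ with purely real, simple, discrete spectrum, whose eigenfunctions $\{\psi_n\}_{n=1}^\infty$ form a basis of $\mathcal{H}$ that is quadratically close to some orthonormal basis $\{\chi_n\}_{n=1}^\infty$, i.e. $\sum_{n=1}^\infty\|\psi_n-\chi_n\|^2<\infty$. Let $\{\phi_n\}_{n=1}^\infty$ be the eigenfunctions of $\mathsf{H}^*$, normalised so that $\langle\psi_m,\phi_n\rangle=\delta_{nm}$ and $\|\phi_n\|=1$ for all $n,m$. Let $\Theta$ be a metric operator for $\mathsf{H}$ of the form $$\Theta=\sum_{n=1}^\infty C_n\langle\phi_n,\cdot\rangle\phi_n \quad(\text{strong limit}),$$ where $C_-\le C_n\le C_+$ for all $n$ with some constants $0<C_-\le C_+<\infty$. Then $\mathsf{I}-\Theta$ is a Hilbert–Schmidt operator if and only if $C_n=1+\alpha_n$ for a sequence $\alpha=\{\alpha_n\}_{n=1}^\infty\in\ell^2(\mathbb{N})$.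
   Context: The inner product is linear in the second entry. An operator $\mathsf{H}$ in $\mathcal{H}$ is quasi-self-adjoint if it is densely defined and there is a bounded, non-negative self-adjoint operator $\Theta:\mathcal{H}\to\mathcal{H}$ with bounded inverse such that $\mathsf{H}^*=\Theta\mathsf{H}\Theta^{-1}$; any such $\Theta$ is called a metric (operator) for $\mathsf{H}$. A sequence $\{\psi_n\}$ is a basis if every vector has a unique norm-convergent expansion $\sum c_n\psi_n$. Simple spectrum means every eigenvalue has geometric and algebraic multiplicity one; discrete spectrum means compact resolvent. *)

theory Defs
  imports "HOL-Analysis.Analysis"
begin

text \<open>Concrete model of an infinite-dimensional separable complex Hilbert space:
  the sequence space l^2(N) of square-summable complex sequences.
  Vectors are functions nat => complex; only those in the carrier l2 matter.\<close>

type_synonym vec = "nat \<Rightarrow> complex"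

definition l2 :: "vec set" where
  "l2 = {f. summable (\<lambda>n. (cmod (f n))\<^sup>2)}"

definition ip :: "vec \<Rightarrow> vec \<Rightarrow> complex" where
  "ip f g = (\<Sum>n. cnj (f n) * g n)"

definition nrm :: "vec \<Rightarrow> real" where
  "nrm f = sqrt (\<Sum>n. (cmod (f n))\<^sup>2)"

definition vdiff :: "vec \<Rightarrow> vec \<Rightarrow> vec" where
  "vdiff f g = (\<lambda>n. f n - g n)"

definition vscale :: "complex \<Rightarrow> vec \<Rightarrow> vec" where
  "vscale c f = (\<lambda>n. c * f n)"

definition l2_tendsto :: "(nat \<Rightarrow> vec) \<Rightarrow> vec \<Rightarrow> bool" where
  "l2_tendsto s x \<longleftrightarrow> (\<lambda>k. nrm (vdiff (s k) x)) \<longlonglongrightarrow> 0"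

definition is_basis :: "(nat \<Rightarrow> vec) \<Rightarrow> bool" where
  "is_basis \<psi> \<longleftrightarrow> (\<forall>k. \<psi> k \<in> l2) \<and>
     (\<forall>x\<in>l2. \<exists>!c::nat \<Rightarrow> complex. l2_tendsto (\<lambda>N i. \<Sum>k<N. c k * \<psi> k i) x)"

definition orthonormal_basis :: "(nat \<Rightarrow> vec) \<Rightarrow> bool" where
  "orthonormal_basis e \<longleftrightarrow> is_basis e \<and>
     (\<forall>j k. ip (e j) (e k) = (if j = k then 1 else 0))"

definition lin_op :: "vec set \<Rightarrow> (vec \<Rightarrow> vec) \<Rightarrow> bool" where
  "lin_op D T \<longleftrightarrow> D \<subseteq> l2 \<and> (\<lambda>n. 0) \<in> D \<and>
     (\<forall>x\<in>D. \<forall>y\<in>D. \<forall>a b. (\<lambda>n. a * x n + b * y n) \<in> D \<and>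
        T (\<lambda>n. a * x n + b * y n) = (\<lambda>n. a * T x n + b * T y n)) \<and>
     (\<forall>x\<in>D. T x \<in> l2)"

definition densely_defined :: "vec set \<Rightarrow> (vec \<Rightarrow> vec) \<Rightarrow> bool" where
  "densely_defined D T \<longleftrightarrow> lin_op D T \<and>
     (\<forall>x\<in>l2. \<forall>\<epsilon>>0. \<exists>y\<in>D. nrm (vdiff x y) < \<epsilon>)"

definition bounded_op :: "(vec \<Rightarrow> vec) \<Rightarrow> bool" where
  "bounded_op T \<longleftrightarrow> lin_op l2 T \<and> (\<exists>M. \<forall>x\<in>l2. nrm (T x) \<le> M * nrm x)"

definition adj_dom :: "vec set \<Rightarrow> (vec \<Rightarrow> vec) \<Rightarrow> vec set" where
  "adj_dom D T = {y\<in>l2. \<exists>z\<in>l2. \<forall>x\<in>D. ip y (T x) = ip z x}"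

definition adj :: "vec set \<Rightarrow> (vec \<Rightarrow> vec) \<Rightarrow> vec \<Rightarrow> vec" where
  "adj D T y = (THE z. z \<in> l2 \<and> (\<forall>x\<in>D. ip y (T x) = ip z x))"

text \<open>Metric operator: bounded, non-negative, self-adjoint, with bounded inverse,
  and H^* = Theta H Theta^{-1} (equality of operators, including domains).\<close>
definition is_metric :: "vec set \<Rightarrow> (vec \<Rightarrow> vec) \<Rightarrow> (vec \<Rightarrow> vec) \<Rightarrow> bool" where
  "is_metric D H \<Theta> \<longleftrightarrow> bounded_op \<Theta> \<and>
     (\<forall>x\<in>l2. \<forall>y\<in>l2. ip x (\<Theta> y) = ip (\<Theta> x) y) \<and>
     (\<forall>x\<in>l2. Re (ip x (\<Theta> x)) \<ge> 0) \<and>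
     (\<exists>\<Theta>i. bounded_op \<Theta>i \<and> (\<forall>x\<in>l2. \<Theta>i (\<Theta> x) = x \<and> \<Theta> (\<Theta>i x) = x) \<and>
        adj_dom D H = {x\<in>l2. \<Theta>i x \<in> D} \<and>
        (\<forall>x\<in>adj_dom D H. adj D H x = \<Theta> (H (\<Theta>i x))))"

definition quasi_self_adjoint :: "vec set \<Rightarrow> (vec \<Rightarrow> vec) \<Rightarrow> bool" where
  "quasi_self_adjoint D H \<longleftrightarrow> densely_defined D H \<and> (\<exists>\<Theta>. is_metric D H \<Theta>)"

definition is_resolvent :: "vec set \<Rightarrow> (vec \<Rightarrow> vec) \<Rightarrow> complex \<Rightarrow> (vec \<Rightarrow> vec) \<Rightarrow> bool" where
  "is_resolvent D H z R \<longleftrightarrow> bounded_op R \<and>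
     (\<forall>x\<in>l2. R x \<in> D \<and> vdiff (H (R x)) (vscale z (R x)) = x) \<and>
     (\<forall>x\<in>D. R (vdiff (H x) (vscale z x)) = x)"

definition spectrum_op :: "vec set \<Rightarrow> (vec \<Rightarrow> vec) \<Rightarrow> complex set" where
  "spectrum_op D H = {z. \<not> (\<exists>R. is_resolvent D H z R)}"

definition compact_op :: "(vec \<Rightarrow> vec) \<Rightarrow> bool" where
  "compact_op T \<longleftrightarrow> bounded_op T \<and>
     (\<forall>s::nat\<Rightarrow>vec. (\<forall>k. s k \<in> l2) \<and> (\<exists>B::real. \<forall>k. nrm (s k) \<le> B) \<longrightarrow>
        (\<exists>(r::nat\<Rightarrow>nat) y. strict_mono r \<and> y \<in> l2 \<and> l2_tendsto (\<lambda>k. T (s (r k))) y))"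

text \<open>Discrete spectrum = compact resolvent.\<close>
definition discrete_spectrum :: "vec set \<Rightarrow> (vec \<Rightarrow> vec) \<Rightarrow> bool" where
  "discrete_spectrum D H \<longleftrightarrow> (\<exists>z R. is_resolvent D H z R \<and> compact_op R)"

definition real_spectrum :: "vec set \<Rightarrow> (vec \<Rightarrow> vec) \<Rightarrow> bool" where
  "real_spectrum D H \<longleftrightarrow> (\<forall>z\<in>spectrum_op D H. Im z = 0)"

definition is_eigenvalue :: "vec set \<Rightarrow> (vec \<Rightarrow> vec) \<Rightarrow> complex \<Rightarrow> bool" where
  "is_eigenvalue D H z \<longleftrightarrow> (\<exists>x\<in>D. x \<noteq> (\<lambda>n. 0) \<and> H x = vscale z x)"

definition root_vec :: "vec set \<Rightarrow> (vec \<Rightarrow> vec) \<Rightarrow> complex \<Rightarrow> vec \<Rightarrow> bool" where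
  "root_vec D H z x \<longleftrightarrow> (\<exists>k. (\<forall>j<k. ((\<lambda>v. vdiff (H v) (vscale z v)) ^^ j) x \<in> D) \<and>
      ((\<lambda>v. vdiff (H v) (vscale z v)) ^^ k) x = (\<lambda>n. 0))"

text \<open>Simple spectrum: for every eigenvalue the root space (algebraic multiplicity),
  and hence the eigenspace (geometric multiplicity), is one-dimensional.\<close>
definition simple_spectrum :: "vec set \<Rightarrow> (vec \<Rightarrow> vec) \<Rightarrow> bool" where
  "simple_spectrum D H \<longleftrightarrow> (\<forall>z. is_eigenvalue D H z \<longrightarrow>
     (\<exists>e\<in>D. e \<noteq> (\<lambda>n. 0) \<and> (\<forall>x. root_vec D H z x \<longrightarrow> (\<exists>c. x = vscale c e))))"

definition hilbert_schmidt :: "(vec \<Rightarrow> vec) \<Rightarrow> bool" where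
  "hilbert_schmidt T \<longleftrightarrow> bounded_op T \<and>
     (\<exists>e. orthonormal_basis e \<and> summable (\<lambda>n. (nrm (T (e n)))\<^sup>2))"

end

theory Submission
  imports Defs
begin

lemma l2_iff: "f \<in> l2 \<longleftrightarrow> summable (\<lambda>n. (cmod (f n))\<^sup>2)" by (simp add: l2_def)

lemma sq_sum_le: "((a::real) + b)\<^sup>2 \<le> 2 * a\<^sup>2 + 2 * b\<^sup>2"
proof -
  have "(a+b)\<^sup>2 + (a-b)\<^sup>2 = 2 * a\<^sup>2 + 2 * b\<^sup>2" by (simp add: power2_eq_square algebra_simps)
  moreover have "0 \<le> (a-b)\<^sup>2" by simp
  ultimately show ?thesis by linarith
qed

lemma prod_le_sq: "(a::real) * b \<le> a\<^sup>2 + b\<^sup>2"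
proof -
  have "2 * (a * b) + (a-b)\<^sup>2 = a\<^sup>2 + b\<^sup>2" by (simp add: power2_eq_square algebra_simps)
  moreover have "0 \<le> (a-b)\<^sup>2" by simp
  moreover have "0 \<le> a\<^sup>2 + b\<^sup>2" by simp
  ultimately show ?thesis by linarith
qed

lemma l2_dom:
  assumes "f \<in> l2" "g \<in> l2" "\<And>n. cmod (h n) \<le> cmod (f n) + cmod (g n)"
  shows "h \<in> l2"
proof -
  have B: "\<And>n. norm ((cmod (h n))\<^sup>2) \<le> 2 * (cmod (f n))\<^sup>2 + 2 * (cmod (g n))\<^sup>2"
  proof -
    fix n
    have "(cmod (h n))\<^sup>2 \<le> (cmod (f n) + cmod (g n))\<^sup>2"
      by (rule power_mono[OF assms(3)]) simp
    also have "\<dots> \<le> 2 * (cmod (f n))\<^sup>2 + 2 * (cmod (g n))\<^sup>2"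
      by (rule sq_sum_le)
    finally show "norm ((cmod (h n))\<^sup>2) \<le> 2 * (cmod (f n))\<^sup>2 + 2 * (cmod (g n))\<^sup>2" by simp
  qed
  have S: "summable (\<lambda>n. 2 * (cmod (f n))\<^sup>2 + 2 * (cmod (g n))\<^sup>2)"
    using assms(1,2) by (intro summable_add summable_mult) (auto simp: l2_iff)
  show ?thesis unfolding l2_iff by (rule summable_comparison_test'[OF S]) (rule B)
qed

lemma l2_zero: "(\<lambda>n. 0) \<in> l2" by (simp add: l2_iff)

lemma l2_add: "f \<in> l2 \<Longrightarrow> g \<in> l2 \<Longrightarrow> (\<lambda>n. f n + g n) \<in> l2"
  by (rule l2_dom[of f g]) (auto intro: norm_triangle_ineq)

lemma l2_diff: "f \<in> l2 \<Longrightarrow> g \<in> l2 \<Longrightarrow> (\<lambda>n. f n - g n) \<in> l2"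
  by (rule l2_dom[of f g]) (auto intro: norm_triangle_ineq4)

lemma l2_vdiff: "f \<in> l2 \<Longrightarrow> g \<in> l2 \<Longrightarrow> vdiff f g \<in> l2"
  unfolding vdiff_def by (rule l2_diff)

lemma l2_scale: "f \<in> l2 \<Longrightarrow> (\<lambda>n. c * f n) \<in> l2"
proof -
  assume "f \<in> l2"
  then have "summable (\<lambda>n. (cmod c)\<^sup>2 * (cmod (f n))\<^sup>2)" by (intro summable_mult) (simp add: l2_iff)
  then show ?thesis by (simp add: l2_iff norm_mult power_mult_distrib)
qed

lemma l2_sum: "finite A \<Longrightarrow> (\<And>k. k \<in> A \<Longrightarrow> g k \<in> l2) \<Longrightarrow> (\<lambda>n. \<Sum>k\<in>A. c k * g k n) \<in> l2"
proof (induction A rule: finite_induct)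
  case empty then show ?case by (simp add: l2_zero)
next
  case (insert x F)
  have "(\<lambda>n. c x * g x n + (\<Sum>k\<in>F. c k * g k n)) \<in> l2"
    by (rule l2_add[OF l2_scale]) (use insert in auto)
  then show ?case using insert(1,2) by simp
qed

lemma ip_abs_summable: assumes "f \<in> l2" "g \<in> l2"
  shows "summable (\<lambda>n. cmod (cnj (f n) * g n))"
proof -
  have B: "\<And>n. norm (cmod (cnj (f n) * g n)) \<le> (cmod (f n))\<^sup>2 + (cmod (g n))\<^sup>2"
    by (simp add: norm_mult prod_le_sq)
  have S: "summable (\<lambda>n. (cmod (f n))\<^sup>2 + (cmod (g n))\<^sup>2)"
    using assms by (intro summable_add) (auto simp: l2_iff)
  show ?thesis by (rule summable_comparison_test'[OF S]) (rule B)
qed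

lemma ip_summable: "f \<in> l2 \<Longrightarrow> g \<in> l2 \<Longrightarrow> summable (\<lambda>n. cnj (f n) * g n)"
  by (rule summable_norm_cancel, rule ip_abs_summable)

lemma ip_sum_right:
  assumes "f \<in> l2" "finite A" "\<And>k. k \<in> A \<Longrightarrow> g k \<in> l2"
  shows "ip f (\<lambda>i. \<Sum>k\<in>A. c k * g k i) = (\<Sum>k\<in>A. c k * ip f (g k))"
proof -
  have "ip f (\<lambda>i. \<Sum>k\<in>A. c k * g k i) = (\<Sum>n. \<Sum>k\<in>A. c k * (cnj (f n) * g k n))"
    unfolding ip_def by (simp add: sum_distrib_left algebra_simps)
  also have "\<dots> = (\<Sum>k\<in>A. \<Sum>n. c k * (cnj (f n) * g k n))"
    using assms by (intro suminf_sum summable_mult ip_summable) auto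
  also have "\<dots> = (\<Sum>k\<in>A. c k * ip f (g k))"
    unfolding ip_def using assms by (intro sum.cong refl suminf_mult ip_summable) auto
  finally show ?thesis .
qed

lemma ip_cnj: "f \<in> l2 \<Longrightarrow> g \<in> l2 \<Longrightarrow> ip g f = cnj (ip f g)"
proof -
  assume a: "f \<in> l2" "g \<in> l2"
  have "(\<lambda>n. cnj (f n) * g n) sums ip f g" unfolding ip_def using ip_summable[OF a] by (rule summable_sums)
  then have "(\<lambda>n. cnj (cnj (f n) * g n)) sums cnj (ip f g)" by (subst sums_cnj)
  then show ?thesis unfolding ip_def by (simp add: sums_iff mult.commute)
qed

lemma ip_sum_left:
  assumes "f \<in> l2" "finite A" "\<And>k. k \<in> A \<Longrightarrow> g k \<in> l2"
  shows "ip (\<lambda>i. \<Sum>k\<in>A. c k * g k i) f = (\<Sum>k\<in>A. cnj (c k) * ip (g k) f)"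
proof -
  have "ip (\<lambda>i. \<Sum>k\<in>A. c k * g k i) f = cnj (ip f (\<lambda>i. \<Sum>k\<in>A. c k * g k i))"
    using assms by (intro ip_cnj l2_sum) auto
  also have "\<dots> = cnj (\<Sum>k\<in>A. c k * ip f (g k))"
    by (simp only: ip_sum_right[OF assms])
  also have "\<dots> = (\<Sum>k\<in>A. cnj (c k) * cnj (ip f (g k)))" by simp
  also have "\<dots> = (\<Sum>k\<in>A. cnj (c k) * ip (g k) f)"
  proof (rule sum.cong[OF refl])
    fix k assume "k \<in> A"
    then have "ip f (g k) = cnj (ip (g k) f)" using assms by (intro ip_cnj) auto
    then show "cnj (c k) * cnj (ip f (g k)) = cnj (c k) * ip (g k) f" by simp
  qed
  finally show ?thesis .
qed

lemma ip_diff_right: assumes "f \<in> l2" "g \<in> l2" "h \<in> l2" shows "ip f (vdiff g h) = ip f g - ip f h"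
proof -
  have "ip f (vdiff g h) = (\<Sum>n. cnj (f n) * g n - cnj (f n) * h n)"
    unfolding ip_def vdiff_def by (simp only: right_diff_distrib)
  also have "\<dots> = ip f g - ip f h" unfolding ip_def
    by (rule suminf_diff[symmetric]) (use assms in \<open>auto intro: ip_summable\<close>)
  finally show ?thesis .
qed

lemma ip_scale_right: assumes "f \<in> l2" "g \<in> l2" shows "ip f (\<lambda>n. c * g n) = c * ip f g"
proof -
  have "ip f (\<lambda>n. c * g n) = (\<Sum>n. c * (cnj (f n) * g n))"
    unfolding ip_def by (simp only: mult.left_commute)
  also have "\<dots> = c * ip f g" unfolding ip_def
    by (rule suminf_mult) (use assms in \<open>auto intro: ip_summable\<close>)
  finally show ?thesis .
qed

lemma nrm_sq: "f \<in> l2 \<Longrightarrow> (nrm f)\<^sup>2 = (\<Sum>n. (cmod (f n))\<^sup>2)"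
  unfolding nrm_def by (simp add: l2_iff suminf_nonneg)

lemma nrm_nonneg: "f \<in> l2 \<Longrightarrow> 0 \<le> nrm f"
  unfolding nrm_def by (simp add: l2_iff suminf_nonneg)

lemma cnj_mult_self: "cnj z * z = complex_of_real ((cmod z)\<^sup>2)"
  by (subst complex_norm_square) (simp add: mult.commute)

lemma ip_self: "f \<in> l2 \<Longrightarrow> ip f f = complex_of_real ((nrm f)\<^sup>2)"
proof -
  assume a: "f \<in> l2"
  have "(\<lambda>n. (cmod (f n))\<^sup>2) sums (\<Sum>n. (cmod (f n))\<^sup>2)" using a by (simp add: l2_iff summable_sums)
  then have "(\<lambda>n. complex_of_real ((cmod (f n))\<^sup>2)) sums complex_of_real (\<Sum>n. (cmod (f n))\<^sup>2)"
    by (rule sums_of_real)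
  moreover have eq: "(\<lambda>n. cnj (f n) * f n) = (\<lambda>n. complex_of_real ((cmod (f n))\<^sup>2))"
    by (rule ext) (rule cnj_mult_self)
  ultimately have "(\<lambda>n. cnj (f n) * f n) sums complex_of_real ((nrm f)\<^sup>2)"
    using a by (simp only: nrm_sq)
  then show ?thesis unfolding ip_def by (simp add: sums_iff)
qed

lemma nrm_zero: "f \<in> l2 \<Longrightarrow> nrm f = 0 \<Longrightarrow> f = (\<lambda>n. 0)"
proof -
  assume a: "f \<in> l2" "nrm f = 0"
  then have "(\<Sum>n. (cmod (f n))\<^sup>2) = 0" using nrm_sq[OF a(1)] by simp
  then have "\<forall>n. (cmod (f n))\<^sup>2 = 0" using a(1) by (subst (asm) suminf_eq_zero_iff) (auto simp: l2_iff)
  then show ?thesis by auto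
qed

lemma real_cs:
  assumes "f \<in> l2" "g \<in> l2"
  shows "(\<Sum>n. cmod (f n) * cmod (g n)) \<le> nrm f * nrm g"
proof (rule suminf_le_const)
  show "summable (\<lambda>n. cmod (f n) * cmod (g n))" using ip_abs_summable[OF assms] by (simp add: norm_mult)
  fix N
  have "(\<Sum>n<N. cmod (f n) * cmod (g n)) = (\<Sum>n<N. \<bar>cmod (f n)\<bar> * \<bar>cmod (g n)\<bar>)" by simp
  also have "\<dots> \<le> L2_set (\<lambda>n. cmod (f n)) {..<N} * L2_set (\<lambda>n. cmod (g n)) {..<N}"
    by (rule L2_set_mult_ineq)
  also have "\<dots> \<le> nrm f * nrm g"
  proof -
    have A: "(\<Sum>n<N. (cmod (f n))\<^sup>2) \<le> (\<Sum>n. (cmod (f n))\<^sup>2)"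
      by (rule sum_le_suminf) (use assms in \<open>auto simp: l2_iff\<close>)
    have B: "(\<Sum>n<N. (cmod (g n))\<^sup>2) \<le> (\<Sum>n. (cmod (g n))\<^sup>2)"
      by (rule sum_le_suminf) (use assms in \<open>auto simp: l2_iff\<close>)
    show ?thesis unfolding L2_set_def nrm_def
      by (rule mult_mono) (use A B assms in \<open>auto intro: real_sqrt_le_mono suminf_nonneg sum_nonneg simp: l2_iff\<close>)
  qed
  finally show "(\<Sum>n<N. cmod (f n) * cmod (g n)) \<le> nrm f * nrm g" .
qed

lemma cs: assumes "f \<in> l2" "g \<in> l2" shows "cmod (ip f g) \<le> nrm f * nrm g"
proof -
  have "cmod (ip f g) \<le> (\<Sum>n. cmod (cnj (f n) * g n))"
    unfolding ip_def by (rule summable_norm, rule ip_abs_summable[OF assms])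
  also have "\<dots> = (\<Sum>n. cmod (f n) * cmod (g n))" by (simp add: norm_mult)
  also have "\<dots> \<le> nrm f * nrm g" by (rule real_cs[OF assms])
  finally show ?thesis .
qed

lemma nrm_dom:
  assumes "f \<in> l2" "g \<in> l2" "\<And>n. cmod (h n) \<le> cmod (f n) + cmod (g n)"
  shows "nrm h \<le> nrm f + nrm g"
proof -
  have h: "h \<in> l2" by (rule l2_dom[OF assms])
  have "(\<Sum>n. (cmod (h n))\<^sup>2) \<le> (\<Sum>n. (cmod (f n))\<^sup>2 + 2 * (cmod (f n) * cmod (g n)) + (cmod (g n))\<^sup>2)"
  proof (rule suminf_le)
    fix n
    have "(cmod (h n))\<^sup>2 \<le> (cmod (f n) + cmod (g n))\<^sup>2" by (rule power_mono[OF assms(3)]) simp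
    then show "(cmod (h n))\<^sup>2 \<le> (cmod (f n))\<^sup>2 + 2 * (cmod (f n) * cmod (g n)) + (cmod (g n))\<^sup>2"
      by (simp add: power2_sum)
  qed (use h assms ip_abs_summable[OF assms(1,2)] in \<open>auto simp: l2_iff norm_mult intro!: summable_add summable_mult\<close>)
  also have "\<dots> = (\<Sum>n. (cmod (f n))\<^sup>2) + 2 * (\<Sum>n. cmod (f n) * cmod (g n)) + (\<Sum>n. (cmod (g n))\<^sup>2)"
  proof -
    have sf: "summable (\<lambda>n. (cmod (f n))\<^sup>2)" and sg: "summable (\<lambda>n. (cmod (g n))\<^sup>2)"
      using assms by (auto simp: l2_iff)
    have sfg: "summable (\<lambda>n. cmod (f n) * cmod (g n))"
      using ip_abs_summable[OF assms(1,2)] by (simp add: norm_mult)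
    have s2: "summable (\<lambda>n. 2 * (cmod (f n) * cmod (g n)))" by (rule summable_mult[OF sfg])
    have "(\<Sum>n. (cmod (f n))\<^sup>2 + 2 * (cmod (f n) * cmod (g n)) + (cmod (g n))\<^sup>2)
        = (\<Sum>n. (cmod (f n))\<^sup>2 + 2 * (cmod (f n) * cmod (g n))) + (\<Sum>n. (cmod (g n))\<^sup>2)"
      by (rule suminf_add[symmetric]) (rule summable_add[OF sf s2], rule sg)
    also have "(\<Sum>n. (cmod (f n))\<^sup>2 + 2 * (cmod (f n) * cmod (g n)))
        = (\<Sum>n. (cmod (f n))\<^sup>2) + (\<Sum>n. 2 * (cmod (f n) * cmod (g n)))"
      by (rule suminf_add[symmetric]) (rule sf, rule s2)
    also have "(\<Sum>n. 2 * (cmod (f n) * cmod (g n))) = 2 * (\<Sum>n. cmod (f n) * cmod (g n))"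
      by (rule suminf_mult[OF sfg])
    finally show ?thesis .
  qed
  also have "\<dots> \<le> (nrm f)\<^sup>2 + 2 * (nrm f * nrm g) + (nrm g)\<^sup>2"
    using real_cs[OF assms(1,2)] nrm_sq[OF assms(1)] nrm_sq[OF assms(2)] by simp
  also have "\<dots> = (nrm f + nrm g)\<^sup>2" by (simp add: power2_sum)
  finally have "(nrm h)\<^sup>2 \<le> (nrm f + nrm g)\<^sup>2" using nrm_sq[OF h] by simp
  then show ?thesis using nrm_nonneg[OF assms(1)] nrm_nonneg[OF assms(2)] by (simp add: power2_le_iff_abs_le)
qed

lemma nrm_scale: "f \<in> l2 \<Longrightarrow> nrm (\<lambda>n. c * f n) = cmod c * nrm f"
proof -
  assume a: "f \<in> l2"
  have "(nrm (\<lambda>n. c * f n))\<^sup>2 = (\<Sum>n. (cmod c)\<^sup>2 * (cmod (f n))\<^sup>2)"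
    using nrm_sq[OF l2_scale[OF a]] by (simp add: norm_mult power_mult_distrib)
  also have "\<dots> = (cmod c * nrm f)\<^sup>2" using a by (simp add: suminf_mult l2_iff nrm_sq power_mult_distrib)
  finally show ?thesis using nrm_nonneg[OF a] nrm_nonneg[OF l2_scale[OF a]]
    by (metis norm_ge_zero power2_eq_iff_nonneg zero_le_mult_iff)
qed

lemma tri1: "cmod a \<le> cmod (a - b) + cmod b"
  using norm_triangle_sub[of a b] by linarith

lemma tri2: "cmod b \<le> cmod a + cmod (a - b)"
  using norm_triangle_ineq4[of a "a-b"] by simp

lemma l2_tendsto_nrm:
  assumes "l2_tendsto s x" "\<And>k. s k \<in> l2" "x \<in> l2"
  shows "(\<lambda>k. nrm (s k)) \<longlonglongrightarrow> nrm x"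
proof -
  have "\<And>k. \<bar>nrm (s k) - nrm x\<bar> \<le> nrm (vdiff (s k) x)"
  proof -
    fix k
    have d: "vdiff (s k) x \<in> l2" using assms by (simp add: l2_vdiff)
    have "nrm (s k) \<le> nrm (vdiff (s k) x) + nrm x"
      by (rule nrm_dom[OF d assms(3)]) (simp add: vdiff_def tri1)
    moreover have "nrm x \<le> nrm (s k) + nrm (vdiff (s k) x)"
      by (rule nrm_dom[OF assms(2) d]) (simp add: vdiff_def tri2)
    ultimately show "\<bar>nrm (s k) - nrm x\<bar> \<le> nrm (vdiff (s k) x)" by linarith
  qed
  then have le: "\<And>k. norm (nrm (s k) - nrm x) \<le> nrm (vdiff (s k) x)" by simp
  have "(\<lambda>k. nrm (s k) - nrm x) \<longlonglongrightarrow> 0"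
    by (rule Lim_null_comparison[OF always_eventually[OF allI[OF le]]])
       (use assms(1) in \<open>simp only: l2_tendsto_def\<close>)
  then show ?thesis by (rule Lim_null[THEN iffD2])
qed

lemma l2_tendsto_ip:
  assumes "l2_tendsto s x" "\<And>k. s k \<in> l2" "x \<in> l2" "y \<in> l2"
  shows "(\<lambda>k. ip y (s k)) \<longlonglongrightarrow> ip y x"
proof -
  have "\<And>k. cmod (ip y (s k) - ip y x) \<le> nrm y * nrm (vdiff (s k) x)"
  proof -
    fix k
    have "ip y (s k) - ip y x = ip y (vdiff (s k) x)" by (rule ip_diff_right[symmetric]) (use assms in auto)
    then show "cmod (ip y (s k) - ip y x) \<le> nrm y * nrm (vdiff (s k) x)"
      using cs[of y "vdiff (s k) x"] assms l2_vdiff by simp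
  qed
  then have le: "\<And>k. norm (ip y (s k) - ip y x) \<le> nrm y * nrm (vdiff (s k) x)" by simp
  have "(\<lambda>k. nrm y * nrm (vdiff (s k) x)) \<longlonglongrightarrow> 0"
    using assms(1) unfolding l2_tendsto_def by (rule tendsto_mult_right_zero)
  then have "(\<lambda>k. ip y (s k) - ip y x) \<longlonglongrightarrow> 0"
    by (rule Lim_null_comparison[OF always_eventually[OF allI[OF le]]])
  then show ?thesis by (rule Lim_null[THEN iffD2])
qed


lemma ip_diff_left: assumes "f \<in> l2" "g \<in> l2" "h \<in> l2" shows "ip (vdiff g h) f = ip g f - ip h f"
proof -
  have "ip (vdiff g h) f = (\<Sum>n. cnj (g n) * f n - cnj (h n) * f n)"
    unfolding ip_def vdiff_def by (simp only: complex_cnj_diff left_diff_distrib)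
  also have "\<dots> = ip g f - ip h f" unfolding ip_def
    by (rule suminf_diff[symmetric]) (use assms in \<open>auto intro: ip_summable\<close>)
  finally show ?thesis .
qed

lemma cmod3: "cmod (- p - q + r) \<le> cmod p + cmod q + cmod r"
proof -
  have "cmod (- p - q + r) \<le> cmod (- p - q) + cmod r" by (rule norm_triangle_ineq)
  moreover have "cmod (- p - q) \<le> cmod p + cmod q"
    using norm_triangle_ineq4[of "-p" q] by simp
  ultimately show ?thesis by linarith
qed

lemma sq3: "((x::real) + y + z)\<^sup>2 \<le> 3 * (x\<^sup>2 + y\<^sup>2 + z\<^sup>2)"
proof -
  have "3 * (x\<^sup>2 + y\<^sup>2 + z\<^sup>2) - (x + y + z)\<^sup>2 = (x-y)\<^sup>2 + (y-z)\<^sup>2 + (x-z)\<^sup>2"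
    by (simp add: power2_eq_square algebra_simps)
  moreover have "0 \<le> (x-y)\<^sup>2 + (y-z)\<^sup>2 + (x-z)\<^sup>2" by simp
  ultimately show ?thesis by linarith
qed

lemma nrm_dom3:
  assumes "f \<in> l2" "g \<in> l2" "h \<in> l2" "\<And>n. cmod (u n) \<le> cmod (f n) + cmod (g n) + cmod (h n)"
  shows "nrm u \<le> nrm f + nrm g + nrm h"
proof -
  define w where "w = (\<lambda>n. complex_of_real (cmod (f n) + cmod (g n)))"
  have cw: "\<And>n. cmod (w n) = cmod (f n) + cmod (g n)" unfolding w_def by (subst norm_of_real) simp
  have w: "w \<in> l2" by (rule l2_dom[OF assms(1,2)]) (simp add: cw)
  have "nrm w \<le> nrm f + nrm g" by (rule nrm_dom[OF assms(1,2)]) (simp add: cw)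
  moreover have "nrm u \<le> nrm w + nrm h" by (rule nrm_dom[OF w assms(3)]) (use assms(4) in \<open>simp add: cw\<close>)
  ultimately show ?thesis by linarith
qed

lemma parseval:
  assumes onb: "orthonormal_basis e" and y: "y \<in> l2"
  shows "(\<lambda>k. (cmod (ip (e k) y))\<^sup>2) sums (nrm y)\<^sup>2"
proof -
  have eb: "\<And>k. e k \<in> l2" and orth: "\<And>j k. ip (e j) (e k) = (if j = k then 1 else 0)"
    using onb by (auto simp: orthonormal_basis_def is_basis_def)
  obtain c where c: "l2_tendsto (\<lambda>N i. \<Sum>k<N. c k * e k i) y"
    using onb y unfolding orthonormal_basis_def is_basis_def by blast
  define S where "S = (\<lambda>N i. \<Sum>k<N. c k * e k i)"
  have SL: "\<And>N. S N \<in> l2" unfolding S_def by (rule l2_sum) (auto simp: eb)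
  have cS: "l2_tendsto S y" using c unfolding S_def .
  have ipS: "ip (e j) (S N) = (if j < N then c j else 0)" for j N
  proof -
    have "ip (e j) (S N) = (\<Sum>k<N. c k * ip (e j) (e k))"
      unfolding S_def by (rule ip_sum_right) (auto simp: eb)
    also have "\<dots> = (\<Sum>k<N. (if k = j then c k else 0))" by (rule sum.cong) (auto simp: orth)
    also have "\<dots> = (if j < N then c j else 0)" by (simp add: sum.delta)
    finally show ?thesis .
  qed
  have cj: "c j = ip (e j) y" for j
  proof -
    have "(\<lambda>N. ip (e j) (S N)) \<longlonglongrightarrow> ip (e j) y" by (rule l2_tendsto_ip[OF cS SL y eb])
    moreover have "(\<lambda>N. ip (e j) (S N)) \<longlonglongrightarrow> c j"
    proof (rule tendsto_eventually)
      show "\<forall>\<^sub>F N in sequentially. ip (e j) (S N) = c j"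
        by (rule eventually_sequentiallyI[of "Suc j"]) (simp add: ipS)
    qed
    ultimately show ?thesis using LIMSEQ_unique by blast
  qed
  have nS: "(nrm (S N))\<^sup>2 = (\<Sum>k<N. (cmod (c k))\<^sup>2)" for N
  proof -
    have "ip (S N) (S N) = (\<Sum>k<N. cnj (c k) * ip (e k) (S N))"
      by (subst (1) S_def, rule ip_sum_left) (auto simp: eb SL)
    also have "\<dots> = (\<Sum>k<N. cnj (c k) * c k)" by (rule sum.cong) (auto simp: ipS)
    also have "\<dots> = (\<Sum>k<N. complex_of_real ((cmod (c k))\<^sup>2))" by (simp only: cnj_mult_self)
    also have "\<dots> = complex_of_real (\<Sum>k<N. (cmod (c k))\<^sup>2)" by simp
    finally have "complex_of_real ((nrm (S N))\<^sup>2) = complex_of_real (\<Sum>k<N. (cmod (c k))\<^sup>2)"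
      using ip_self[OF SL] by simp
    then show ?thesis by (simp only: of_real_eq_iff)
  qed
  have "(\<lambda>N. (nrm (S N))\<^sup>2) \<longlonglongrightarrow> (nrm y)\<^sup>2"
    by (intro tendsto_power l2_tendsto_nrm[OF cS SL y])
  then show ?thesis unfolding sums_def nS cj .
qed

lemma dbl_bound:
  fixes F :: "nat \<Rightarrow> nat \<Rightarrow> real"
  assumes FG: "\<And>m. (\<lambda>k. F m k) sums G m" and F0: "\<And>m k. 0 \<le> F m k" and B: "summable B"
    and FB: "\<And>k N. (\<Sum>m<N. F m k) \<le> B k"
  shows "summable G"
proof (rule summableI_nonneg_bounded)
  show "0 \<le> G m" for m using FG[of m] F0 by (metis sums_le sums_zero) 
  fix N
  have "(\<Sum>m<N. G m) = (\<Sum>m<N. \<Sum>k. F m k)" using FG by (simp add: sums_iff)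
  also have "\<dots> = (\<Sum>k. \<Sum>m<N. F m k)" 
    by (rule suminf_sum[symmetric]) (use FG in \<open>auto simp: sums_iff\<close>)
  also have "\<dots> \<le> (\<Sum>k. B k)"
    by (rule suminf_le) (use FB B FG in \<open>auto simp: sums_iff intro!: summable_sum\<close>)
  finally show "(\<Sum>m<N. G m) \<le> (\<Sum>k. B k)" .
qed

theorem lemma4p1:
  fixes D :: "vec set" and H :: "vec \<Rightarrow> vec"
    and \<psi> chi \<phi> :: "nat \<Rightarrow> vec" and ev evs :: "nat \<Rightarrow> complex"
    and \<Theta> :: "vec \<Rightarrow> vec" and C :: "nat \<Rightarrow> real" and Cm Cp :: real
  assumes qsa: "quasi_self_adjoint D H"
    and real_spec: "real_spectrum D H"
    and simple: "simple_spectrum D H"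
    and discrete: "discrete_spectrum D H"
    and psi_eig: "\<And>n. \<psi> n \<in> D \<and> \<psi> n \<noteq> (\<lambda>i. 0) \<and> H (\<psi> n) = vscale (ev n) (\<psi> n)"
    and psi_basis: "is_basis \<psi>"
    and chi_onb: "orthonormal_basis chi"
    and quad_close: "summable (\<lambda>n. (nrm (vdiff (\<psi> n) (chi n)))\<^sup>2)"
    and phi_eig: "\<And>n. \<phi> n \<in> adj_dom D H \<and> \<phi> n \<noteq> (\<lambda>i. 0) \<and>
                      adj D H (\<phi> n) = vscale (evs n) (\<phi> n)"
    and biorth: "\<And>m n. ip (\<psi> m) (\<phi> n) = (if n = m then 1 else 0)"
    and phi_norm: "\<And>n. nrm (\<phi> n) = 1"
    and metric: "is_metric D H \<Theta>"
    and Theta_series: "\<And>x. x \<in> l2 \<Longrightarrow>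
          l2_tendsto (\<lambda>N i. \<Sum>n<N. complex_of_real (C n) * ip (\<phi> n) x * \<phi> n i) (\<Theta> x)"
    and Cm_pos: "0 < Cm" and Cm_le: "Cm \<le> Cp"
    and C_bounds: "\<And>n. Cm \<le> C n \<and> C n \<le> Cp"
  shows "hilbert_schmidt (\<lambda>x. vdiff x (\<Theta> x)) \<longleftrightarrow>
         (\<exists>\<alpha> :: nat \<Rightarrow> real. summable (\<lambda>n. (\<alpha> n)\<^sup>2) \<and> (\<forall>n. C n = 1 + \<alpha> n))"
proof -
  have lin: "lin_op l2 \<Theta>" and selfadj: "\<And>x y. x \<in> l2 \<Longrightarrow> y \<in> l2 \<Longrightarrow> ip x (\<Theta> y) = ip (\<Theta> x) y"
    using metric unfolding is_metric_def bounded_op_def by auto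
  obtain M0 where M0: "\<And>x. x \<in> l2 \<Longrightarrow> nrm (\<Theta> x) \<le> M0 * nrm x"
    using metric unfolding is_metric_def bounded_op_def by blast
  define M where "M = max M0 0"
  have M_nn: "0 \<le> M" unfolding M_def by simp
  have M: "nrm (\<Theta> x) \<le> M * nrm x" if x: "x \<in> l2" for x
  proof -
    have "M0 * nrm x \<le> M * nrm x" unfolding M_def by (rule mult_right_mono[OF _ nrm_nonneg[OF x]]) simp
    then show ?thesis using M0[OF x] by linarith
  qed
  have ThL: "\<And>x. x \<in> l2 \<Longrightarrow> \<Theta> x \<in> l2" using lin unfolding lin_op_def by blast
  have Thlin: "\<And>x y a b. x \<in> l2 \<Longrightarrow> y \<in> l2 \<Longrightarrow> \<Theta> (\<lambda>n. a * x n + b * y n) = (\<lambda>n. a * \<Theta> x n + b * \<Theta> y n)"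
    using lin unfolding lin_op_def by blast
  have Thdiff: "\<Theta> (vdiff x y) = vdiff (\<Theta> x) (\<Theta> y)" if "x \<in> l2" "y \<in> l2" for x y
    using Thlin[OF that, of 1 "-1"] by (simp add: vdiff_def)
  have psiL: "\<And>n. \<psi> n \<in> l2" using psi_basis by (simp add: is_basis_def)
  have chiL: "\<And>n. chi n \<in> l2" using chi_onb by (simp add: orthonormal_basis_def is_basis_def)
  have chi_orth: "\<And>j k. ip (chi j) (chi k) = (if j = k then 1 else 0)"
    using chi_onb by (simp add: orthonormal_basis_def)
  have phiL: "\<phi> n \<in> l2" for n using phi_eig[of n] unfolding adj_dom_def by blast
  define d where "d n = vdiff (\<psi> n) (chi n)" for n
  have dL: "\<And>n. d n \<in> l2" unfolding d_def by (rule l2_vdiff[OF psiL chiL])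
  have dsum: "summable (\<lambda>m. (nrm (d m))\<^sup>2)" using quad_close unfolding d_def .
  have Cpos: "0 < C n" for n by (rule less_le_trans[OF Cm_pos]) (use C_bounds in blast)

  have ThPsi: "\<Theta> (\<psi> m) = (\<lambda>i. complex_of_real (C m) * \<phi> m i)" for m
  proof -
    define V where "V = (\<lambda>i. complex_of_real (C m) * \<phi> m i)"
    have VL: "V \<in> l2" unfolding V_def by (rule l2_scale[OF phiL])
    have cf: "ip (\<phi> n) (\<psi> m) = (if n = m then 1 else 0)" for n
      using ip_cnj[OF psiL[of m] phiL[of n]] biorth[of m n] by simp
    define P where "P = (\<lambda>N i. \<Sum>n<N. complex_of_real (C n) * ip (\<phi> n) (\<psi> m) * \<phi> n i)"
    have PS: "P N = V" if "m < N" for N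
    proof
      fix i
      have "P N i = (\<Sum>n<N. if n = m then complex_of_real (C n) * \<phi> n i else 0)"
        unfolding P_def by (rule sum.cong) (auto simp: cf)
      also have "\<dots> = V i" using that by (simp add: sum.delta V_def)
      finally show "P N i = V i" .
    qed
    have T: "l2_tendsto P (\<Theta> (\<psi> m))" unfolding P_def by (rule Theta_series[OF psiL])
    then have "(\<lambda>N. nrm (vdiff (P N) (\<Theta> (\<psi> m)))) \<longlonglongrightarrow> 0" unfolding l2_tendsto_def .
    moreover have "(\<lambda>N. nrm (vdiff (P N) (\<Theta> (\<psi> m)))) \<longlonglongrightarrow> nrm (vdiff V (\<Theta> (\<psi> m)))"
      by (rule tendsto_eventually, rule eventually_sequentiallyI[of "Suc m"]) (simp add: PS)
    ultimately have "nrm (vdiff V (\<Theta> (\<psi> m))) = 0" using LIMSEQ_unique by metis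
    then have "vdiff V (\<Theta> (\<psi> m)) = (\<lambda>n. 0)" by (rule nrm_zero[OF l2_vdiff[OF VL ThL[OF psiL]]])
    then show ?thesis unfolding V_def[symmetric] by (auto simp: vdiff_def fun_eq_iff)
  qed

  define K where "K = M / Cm"
  have bessel: "(\<Sum>n<N. (cmod (ip (\<phi> n) x))\<^sup>2) \<le> K * (nrm x)\<^sup>2" if x: "x \<in> l2" for x N
  proof -
    define S where "S = (\<lambda>N i. \<Sum>n<N. complex_of_real (C n) * ip (\<phi> n) x * \<phi> n i)"
    have SL: "\<And>N. S N \<in> l2" unfolding S_def by (rule l2_sum) (auto simp: phiL)
    have cS: "l2_tendsto S (\<Theta> x)" unfolding S_def by (rule Theta_series[OF x])
    have ipS: "ip x (S N) = complex_of_real (\<Sum>n<N. C n * (cmod (ip (\<phi> n) x))\<^sup>2)" for N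
    proof -
      have "ip x (S N) = (\<Sum>n<N. complex_of_real (C n) * ip (\<phi> n) x * ip x (\<phi> n))"
        unfolding S_def by (rule ip_sum_right) (auto simp: x phiL)
      also have "\<dots> = (\<Sum>n<N. complex_of_real (C n * (cmod (ip (\<phi> n) x))\<^sup>2))"
      proof (rule sum.cong[OF refl])
        fix n
        have "ip x (\<phi> n) = cnj (ip (\<phi> n) x)" by (rule ip_cnj[OF phiL x])
        then have e: "ip (\<phi> n) x * ip x (\<phi> n) = complex_of_real ((cmod (ip (\<phi> n) x))\<^sup>2)"
          using cnj_mult_self[of "ip (\<phi> n) x"] by (simp add: mult.commute)
        show "complex_of_real (C n) * ip (\<phi> n) x * ip x (\<phi> n) = complex_of_real (C n * (cmod (ip (\<phi> n) x))\<^sup>2)"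
          by (simp only: mult.assoc e of_real_mult)
      qed
      also have "\<dots> = complex_of_real (\<Sum>n<N. C n * (cmod (ip (\<phi> n) x))\<^sup>2)" by simp
      finally show ?thesis .
    qed
    have "(\<lambda>N. ip x (S N)) \<longlonglongrightarrow> ip x (\<Theta> x)" by (rule l2_tendsto_ip[OF cS SL ThL[OF x] x])
    then have "(\<lambda>N. Re (ip x (S N))) \<longlonglongrightarrow> Re (ip x (\<Theta> x))" by (rule tendsto_Re)
    then have lim: "(\<lambda>N. \<Sum>n<N. C n * (cmod (ip (\<phi> n) x))\<^sup>2) \<longlonglongrightarrow> Re (ip x (\<Theta> x))"
      by (simp only: ipS Re_complex_of_real)
    have inc: "incseq (\<lambda>N. \<Sum>n<N. C n * (cmod (ip (\<phi> n) x))\<^sup>2)"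
    proof (rule incseq_SucI)
      fix N
      have "0 \<le> C N * (cmod (ip (\<phi> N) x))\<^sup>2" using Cpos[of N] by simp
      then show "(\<Sum>n<N. C n * (cmod (ip (\<phi> n) x))\<^sup>2) \<le> (\<Sum>n<Suc N. C n * (cmod (ip (\<phi> n) x))\<^sup>2)"
        by simp
    qed
    have "(\<Sum>n<N. C n * (cmod (ip (\<phi> n) x))\<^sup>2) \<le> Re (ip x (\<Theta> x))" by (rule incseq_le[OF inc lim])
    also have "\<dots> \<le> cmod (ip x (\<Theta> x))" by (rule complex_Re_le_cmod)
    also have "\<dots> \<le> nrm x * nrm (\<Theta> x)" by (rule cs[OF x ThL[OF x]])
    also have "\<dots> \<le> nrm x * (M * nrm x)" by (rule mult_left_mono[OF M[OF x] nrm_nonneg[OF x]])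
    finally have A: "(\<Sum>n<N. C n * (cmod (ip (\<phi> n) x))\<^sup>2) \<le> M * (nrm x)\<^sup>2"
      by (simp add: power2_eq_square mult_ac)
    have "Cm * (\<Sum>n<N. (cmod (ip (\<phi> n) x))\<^sup>2) \<le> (\<Sum>n<N. C n * (cmod (ip (\<phi> n) x))\<^sup>2)"
      unfolding sum_distrib_left by (rule sum_mono, rule mult_right_mono) (use C_bounds in auto)
    then have "Cm * (\<Sum>n<N. (cmod (ip (\<phi> n) x))\<^sup>2) \<le> M * (nrm x)\<^sup>2" using A by linarith
    then show ?thesis unfolding K_def using Cm_pos by (simp add: field_simps)
  qed

  define a where "a m = nrm (vdiff (\<phi> m) (chi m))" for m
  have aL: "\<And>m. vdiff (\<phi> m) (chi m) \<in> l2" by (rule l2_vdiff[OF phiL chiL])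
  have a_sum: "summable (\<lambda>m. (a m)\<^sup>2)"
  proof (rule dbl_bound[where F = "\<lambda>m k. (cmod (ip (\<phi> m) (d k)))\<^sup>2" and B = "\<lambda>k. K * (nrm (d k))\<^sup>2"])
    show "(\<lambda>k. (cmod (ip (\<phi> m) (d k)))\<^sup>2) sums (a m)\<^sup>2" for m
    proof -
      have P: "(\<lambda>k. (cmod (ip (chi k) (vdiff (\<phi> m) (chi m))))\<^sup>2) sums (a m)\<^sup>2"
        unfolding a_def by (rule parseval[OF chi_onb aL])
      have "(cmod (ip (chi k) (vdiff (\<phi> m) (chi m))))\<^sup>2 = (cmod (ip (\<phi> m) (d k)))\<^sup>2" for k
      proof -
        have "ip (chi k) (vdiff (\<phi> m) (chi m)) = ip (chi k) (\<phi> m) - ip (chi k) (chi m)"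
          by (rule ip_diff_right[OF chiL phiL chiL])
        also have "\<dots> = ip (chi k) (\<phi> m) - ip (\<psi> k) (\<phi> m)" using chi_orth biorth by simp
        also have "\<dots> = - ip (d k) (\<phi> m)" unfolding d_def using ip_diff_left[OF phiL psiL chiL] by simp
        also have "\<dots> = - cnj (ip (\<phi> m) (d k))" using ip_cnj[OF phiL dL] by simp
        finally show ?thesis by simp
      qed
      then show ?thesis using P by simp
    qed
    show "0 \<le> (cmod (ip (\<phi> m) (d k)))\<^sup>2" for m k by simp
    show "summable (\<lambda>k. K * (nrm (d k))\<^sup>2)" by (rule summable_mult[OF dsum])
    show "(\<Sum>m<N. (cmod (ip (\<phi> m) (d k)))\<^sup>2) \<le> K * (nrm (d k))\<^sup>2" for k N by (rule bessel[OF dL])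
  qed

  define T where "T = (\<lambda>x. vdiff x (\<Theta> x))"
  have TL: "\<And>x. x \<in> l2 \<Longrightarrow> T x \<in> l2" by (simp add: T_def l2_vdiff ThL)
  have T_bd: "bounded_op T"
  proof -
    have cl: "\<And>x y a b. x \<in> l2 \<Longrightarrow> y \<in> l2 \<Longrightarrow> (\<lambda>n. a * x n + b * y n) \<in> l2"
      by (rule l2_add[OF l2_scale l2_scale])
    have li: "T (\<lambda>n. a * x n + b * y n) = (\<lambda>n. a * T x n + b * T y n)" if "x \<in> l2" "y \<in> l2" for x y a b
      unfolding T_def vdiff_def Thlin[OF that] by (simp add: algebra_simps)
    have "lin_op l2 T" unfolding lin_op_def using cl li TL l2_zero by blast
    moreover have "nrm (T x) \<le> (1 + M) * nrm x" if x: "x \<in> l2" for x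
    proof -
      have "nrm (T x) \<le> nrm x + nrm (\<Theta> x)" unfolding T_def vdiff_def
        by (rule nrm_dom[OF x ThL[OF x]]) (rule norm_triangle_ineq4)
      then show ?thesis using M[OF x] by (simp add: algebra_simps)
    qed
    ultimately show ?thesis unfolding bounded_op_def by blast
  qed
  have T_sa: "ip x (T y) = ip (T x) y" if x: "x \<in> l2" and y: "y \<in> l2" for x y
  proof -
    have "ip x (T y) = ip x y - ip x (\<Theta> y)" unfolding T_def by (rule ip_diff_right[OF x y ThL[OF y]])
    also have "\<dots> = ip x y - ip (\<Theta> x) y" using selfadj[OF x y] by simp
    also have "\<dots> = ip (T x) y" unfolding T_def by (rule ip_diff_left[OF y x ThL[OF x], symmetric])
    finally show ?thesis .
  qed

  define \<alpha> where "\<alpha> n = C n - 1" for n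
  have Tchi: "T (chi m) = (\<lambda>i. - (\<phi> m i - chi m i) - complex_of_real (\<alpha> m) * \<phi> m i + \<Theta> (d m) i)" for m
  proof -
    have "\<Theta> (d m) = vdiff (\<Theta> (\<psi> m)) (\<Theta> (chi m))" unfolding d_def by (rule Thdiff[OF psiL chiL])
    then have "\<And>i. \<Theta> (chi m) i = complex_of_real (C m) * \<phi> m i - \<Theta> (d m) i"
      by (simp add: vdiff_def ThPsi)
    then show ?thesis unfolding T_def vdiff_def \<alpha>_def by (auto simp: fun_eq_iff algebra_simps)
  qed
  have nd: "nrm (\<Theta> (d m)) \<le> M * nrm (d m)" for m by (rule M[OF dL])
  have nal: "nrm (\<lambda>i. complex_of_real (\<alpha> m) * \<phi> m i) = \<bar>\<alpha> m\<bar>" for m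
    using nrm_scale[OF phiL, of "complex_of_real (\<alpha> m)" m] phi_norm[of m] by simp
  have bound_T: "nrm (T (chi m)) \<le> a m + \<bar>\<alpha> m\<bar> + M * nrm (d m)" for m
  proof -
    have "nrm (T (chi m)) \<le> nrm (vdiff (\<phi> m) (chi m)) + nrm (\<lambda>i. complex_of_real (\<alpha> m) * \<phi> m i) + nrm (\<Theta> (d m))"
      by (rule nrm_dom3[OF aL l2_scale[OF phiL] ThL[OF dL]]) (simp only: Tchi vdiff_def, rule cmod3)
    then show ?thesis unfolding a_def using nal[of m] nd[of m] by linarith
  qed
  have bound_a: "\<bar>\<alpha> m\<bar> \<le> a m + nrm (T (chi m)) + M * nrm (d m)" for m
  proof -
    have eq: "(\<lambda>i. complex_of_real (\<alpha> m) * \<phi> m i) = (\<lambda>i. - (\<phi> m i - chi m i) - T (chi m) i + \<Theta> (d m) i)"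
      by (rule ext) (simp add: Tchi algebra_simps)
    have "nrm (\<lambda>i. - (\<phi> m i - chi m i) - T (chi m) i + \<Theta> (d m) i) \<le> nrm (vdiff (\<phi> m) (chi m)) + nrm (T (chi m)) + nrm (\<Theta> (d m))"
      by (rule nrm_dom3[OF aL TL[OF chiL] ThL[OF dL]]) (simp only: vdiff_def, rule cmod3)
    then show ?thesis unfolding a_def eq[symmetric] using nal[of m] nd[of m] by linarith
  qed
  have a_nn: "0 \<le> a m" for m unfolding a_def by (rule nrm_nonneg[OF aL])
  have d_nn: "0 \<le> nrm (d m)" for m by (rule nrm_nonneg[OF dL])
  have sqT: "(nrm (T (chi m)))\<^sup>2 \<le> 3 * ((a m)\<^sup>2 + (\<alpha> m)\<^sup>2 + M\<^sup>2 * (nrm (d m))\<^sup>2)" for m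
  proof -
    have "(nrm (T (chi m)))\<^sup>2 \<le> (a m + \<bar>\<alpha> m\<bar> + M * nrm (d m))\<^sup>2"
      by (rule power_mono[OF bound_T nrm_nonneg[OF TL[OF chiL]]])
    also have "\<dots> \<le> 3 * ((a m)\<^sup>2 + \<bar>\<alpha> m\<bar>\<^sup>2 + (M * nrm (d m))\<^sup>2)" by (rule sq3)
    finally show ?thesis by (simp add: power_mult_distrib)
  qed
  have sqa: "(\<alpha> m)\<^sup>2 \<le> 3 * ((a m)\<^sup>2 + (nrm (T (chi m)))\<^sup>2 + M\<^sup>2 * (nrm (d m))\<^sup>2)" for m
  proof -
    have "\<bar>\<alpha> m\<bar>\<^sup>2 \<le> (a m + nrm (T (chi m)) + M * nrm (d m))\<^sup>2"
      by (rule power_mono[OF bound_a]) simp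
    also have "\<dots> \<le> 3 * ((a m)\<^sup>2 + (nrm (T (chi m)))\<^sup>2 + (M * nrm (d m))\<^sup>2)" by (rule sq3)
    finally show ?thesis by (simp add: power_mult_distrib)
  qed

  show ?thesis
  proof
    assume hs: "hilbert_schmidt (\<lambda>x. vdiff x (\<Theta> x))"
    then obtain e where onb: "orthonormal_basis e" and se: "summable (\<lambda>n. (nrm (T (e n)))\<^sup>2)"
      unfolding hilbert_schmidt_def T_def by blast
    have eL: "\<And>n. e n \<in> l2" using onb by (simp add: orthonormal_basis_def is_basis_def)
    have tsum: "summable (\<lambda>m. (nrm (T (chi m)))\<^sup>2)"
    proof (rule dbl_bound[where F = "\<lambda>m n. (cmod (ip (chi m) (T (e n))))\<^sup>2" and B = "\<lambda>n. (nrm (T (e n)))\<^sup>2"])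
      show "(\<lambda>n. (cmod (ip (chi m) (T (e n))))\<^sup>2) sums (nrm (T (chi m)))\<^sup>2" for m
      proof -
        have P: "(\<lambda>n. (cmod (ip (e n) (T (chi m))))\<^sup>2) sums (nrm (T (chi m)))\<^sup>2"
          by (rule parseval[OF onb TL[OF chiL]])
        have "ip (e n) (T (chi m)) = cnj (ip (chi m) (T (e n)))" for n
        proof -
          have "ip (e n) (T (chi m)) = ip (T (e n)) (chi m)" by (rule T_sa[OF eL chiL])
          also have "\<dots> = cnj (ip (chi m) (T (e n)))" by (rule ip_cnj[OF chiL TL[OF eL]])
          finally show ?thesis .
        qed
        then show ?thesis using P by simp
      qed
      show "0 \<le> (cmod (ip (chi m) (T (e n))))\<^sup>2" for m n by simp
      show "summable (\<lambda>n. (nrm (T (e n)))\<^sup>2)" by (rule se)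
      show "(\<Sum>m<N. (cmod (ip (chi m) (T (e n))))\<^sup>2) \<le> (nrm (T (e n)))\<^sup>2" for n N
      proof -
        have P: "(\<lambda>m. (cmod (ip (chi m) (T (e n))))\<^sup>2) sums (nrm (T (e n)))\<^sup>2"
          by (rule parseval[OF chi_onb TL[OF eL]])
        have "(\<Sum>m<N. (cmod (ip (chi m) (T (e n))))\<^sup>2) \<le> (\<Sum>m. (cmod (ip (chi m) (T (e n))))\<^sup>2)"
          by (rule sum_le_suminf[OF sums_summable[OF P]]) auto
        then show ?thesis using sums_unique[OF P] by simp
      qed
    qed
    have S: "summable (\<lambda>m. 3 * ((a m)\<^sup>2 + (nrm (T (chi m)))\<^sup>2 + M\<^sup>2 * (nrm (d m))\<^sup>2))"
      by (intro summable_mult summable_add a_sum tsum dsum)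
    have "summable (\<lambda>m. (\<alpha> m)\<^sup>2)"
      by (rule summable_comparison_test'[OF S]) (simp only: real_norm_def abs_power2 power2_abs sqa)
    then show "\<exists>\<alpha>. summable (\<lambda>n. (\<alpha> n)\<^sup>2) \<and> (\<forall>n. C n = 1 + \<alpha> n)"
      by (intro exI[of _ \<alpha>]) (simp add: \<alpha>_def)
  next
    assume "\<exists>\<alpha>. summable (\<lambda>n. (\<alpha> n)\<^sup>2) \<and> (\<forall>n. C n = 1 + \<alpha> n)"
    then obtain \<beta> where sb: "summable (\<lambda>n. (\<beta> n)\<^sup>2)" and Cb: "\<forall>n. C n = 1 + \<beta> n" by blast
    have "\<alpha> = \<beta>" by (rule ext) (simp add: \<alpha>_def Cb)
    then have asum: "summable (\<lambda>n. (\<alpha> n)\<^sup>2)" using sb by simp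
    have S: "summable (\<lambda>m. 3 * ((a m)\<^sup>2 + (\<alpha> m)\<^sup>2 + M\<^sup>2 * (nrm (d m))\<^sup>2))"
      by (intro summable_mult summable_add a_sum asum dsum)
    have "summable (\<lambda>m. (nrm (T (chi m)))\<^sup>2)"
      by (rule summable_comparison_test'[OF S]) (simp only: real_norm_def abs_power2 power2_abs sqT)
    then show "hilbert_schmidt (\<lambda>x. vdiff x (\<Theta> x))"
      unfolding hilbert_schmidt_def T_def[symmetric] using T_bd chi_onb by blast
  qed
qed

end
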